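(* If $t$ is an $l$-term with $t\to_s^* F_1$, then there exists an $s$-reduction from $t$ to $F_1$ in which no contracted redex occurs inside a tuple (i.e. no contracted redex occurrence lies within a component of a tuple subterm of the term being contracted).
   Context: $i$-terms (unlabelled terms) are built from variables and the constants $C,T,F,K,S$ by binary application (left-associative). $\mathrm{CLC}$ is the conditional system with rules $C\,T\,x\,y\to x$; $C\,F\,x\,y\to y$; $C\,z\,x\,y\to x \Leftarrow x=y$; $K\,x\,y\to x$; $S\,x\,y\,z\to x\,z\,(y\,z)$, where $=$ is convertibility in $\mathrm{CLC}$ itself (defined by levels: $R_0$ with empty condition, $R_{n+1}$ with $=$ the conversion of $\to_{R_n}$, $\to_{\mathrm{CLC}}=\bigcup_n\to_{R_n}$); $=_{\mathrm{CLC}}$ is conversion in $\mathrm{CLC}$. Labelled constants: $C_1,C_2,T_1,F_1,K_1$ and $S^{n_0,\dots,n_k}$ for all $k\ge1$, $n_0,\dots,n_k\ge1$. $l$-terms: every $i$-term; every labelled constant; $t_1t_2$ for $l$-terms $t_1,t_2$; and $\langle t_1,\dots,t_n\rangle$ for $l$-terms $t_1,\dots,t_n$ with $n\ge2$ (a tuple of size $n$). Convention: $\langle t\rangle\equiv t$ (not a tuple). Erasures: an $i$-term is an erasure of itself; $C$ is an erasure of $C_1,C_2$; $T$ of $T_1$; $F$ of $F_1$; $K$ of $K_1$; $S$ of each $S^{n_0,\dots,n_k}$; if $q_1,q_2$ are erasures of $t_1,t_2$ then $q_1q_2$ is an erasure of $t_1t_2$; if $q_i$ is an erasure of $t_i$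 for some $i$ then $q_i$ is an erasure of $\langle t_1,\dots,t_n\rangle$. The leftmost erasure $\lfloor t\rfloor$ always chooses $i=1$ for tuples. $\mathrm{CLC}_s$ is the rewriting system on $l$-terms (variables instantiated by arbitrary $l$-terms, contraction allowed in any context, including inside tuple components) with rules: $C_1T_1xy\to x$; $C_1F_1xy\to y$; $C_2zxy\to x\Leftarrow\lfloor x\rfloor=_{\mathrm{CLC}}\lfloor y\rfloor$; $C_2Txy\to x$; $C_2Fxy\to y$; $C_2T_1xy\to x$; $C_2F_1xy\to y$; $K_1xy\to x$; and, for each $S^{n_0,\dots,n_k}$, $S^{n_0,\dots,n_k}\,x\,\langle y_1,\dots,y_k\rangle\,\langle z_{0,1},\dots,z_{0,n_0},z_{1,1},\dots,z_{1,n_1},\dots,z_{k,1},\dots,z_{k,n_k}\rangle \to x\,\langle z_{0,1},\dots,z_{0,n_0}\rangle\,\langle y_1\langle z_{1,1},\dots,z_{1,n_1}\rangle,\dots,y_k\langle z_{k,1},\dots,z_{k,n_k}\rangle\rangle$ under the condition that $\lfloor z_{i,j}\rfloor=_{\mathrm{CLC}}\lfloor z_{i',j'}\rfloor$ for all index pairs and $\lfloor y_i\rfloor=_{\mathrm{CLC}}\lfloor y_j\rfloor$ for all $i,j$. One-step contraction in $\mathrm{CLC}_s$ is written $\to_s$ and $\to_s^*$ is its reflexive–transitive closure ($s$-reduction). *)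

theory Defs
  imports Main
begin

datatype iterm = IVar nat | IC | IT | IF | IK | IS | IApp iterm iterm

inductive clc_ctx :: "(iterm \<Rightarrow> iterm \<Rightarrow> bool) \<Rightarrow> iterm \<Rightarrow> iterm \<Rightarrow> bool"
  for cond :: "iterm \<Rightarrow> iterm \<Rightarrow> bool" where
  cT: "clc_ctx cond (IApp (IApp (IApp IC IT) x) y) x"
| cF: "clc_ctx cond (IApp (IApp (IApp IC IF) x) y) y"
| cZ: "cond x y \<Longrightarrow> clc_ctx cond (IApp (IApp (IApp IC z) x) y) x"
| cK: "clc_ctx cond (IApp (IApp IK x) y) x"
| cS: "clc_ctx cond (IApp (IApp (IApp IS x) y) z) (IApp (IApp x z) (IApp y z))"
| appL: "clc_ctx cond s s' \<Longrightarrow> clc_ctx cond (IApp s t) (IApp s' t)"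
| appR: "clc_ctx cond t t' \<Longrightarrow> clc_ctx cond (IApp s t) (IApp s t')"

primrec clc_R :: "nat \<Rightarrow> iterm \<Rightarrow> iterm \<Rightarrow> bool" where
  "clc_R 0 = clc_ctx (\<lambda>_ _. False)"
| "clc_R (Suc n) = clc_ctx (equivclp (clc_R n))"

definition clc_step :: "iterm \<Rightarrow> iterm \<Rightarrow> bool" where
  "clc_step s t \<longleftrightarrow> (\<exists>n. clc_R n s t)"

definition clc_conv :: "iterm \<Rightarrow> iterm \<Rightarrow> bool" where
  "clc_conv = equivclp clc_step"

datatype lterm =
    LVar nat | LC | LT | LF | LK | LS
  | LC1 | LC2 | LT1 | LF1 | LK1
  | LSl "nat list"   \<comment> \<open>S^{n_0,...,n_k}, label list [n_0,...,n_k]\<close>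
  | LApp lterm lterm
  | Tup "lterm list"

fun wf_lterm :: "lterm \<Rightarrow> bool" where
  "wf_lterm (LSl ns) \<longleftrightarrow> length ns \<ge> 2 \<and> (\<forall>n\<in>set ns. n \<ge> 1)"
| "wf_lterm (LApp s t) \<longleftrightarrow> wf_lterm s \<and> wf_lterm t"
| "wf_lterm (Tup ts) \<longleftrightarrow> length ts \<ge> 2 \<and> (\<forall>t\<in>set ts. wf_lterm t)"
| "wf_lterm _ \<longleftrightarrow> True"

fun mktup :: "lterm list \<Rightarrow> lterm" where
  "mktup [t] = t"
| "mktup ts = Tup ts"

fun lerase :: "lterm \<Rightarrow> iterm" where
  "lerase (LVar v) = IVar v"
| "lerase LC = IC" | "lerase LT = IT" | "lerase LF = IF" | "lerase LK = IK" | "lerase LS = IS"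
| "lerase LC1 = IC" | "lerase LC2 = IC" | "lerase LT1 = IT" | "lerase LF1 = IF" | "lerase LK1 = IK"
| "lerase (LSl ns) = IS"
| "lerase (LApp s t) = IApp (lerase s) (lerase t)"
| "lerase (Tup (t # ts)) = lerase t"
| "lerase (Tup []) = IVar 0"

inductive s_root :: "lterm \<Rightarrow> lterm \<Rightarrow> bool" where
  r1: "s_root (LApp (LApp (LApp LC1 LT1) x) y) x"
| r2: "s_root (LApp (LApp (LApp LC1 LF1) x) y) y"
| r3: "clc_conv (lerase x) (lerase y) \<Longrightarrow> s_root (LApp (LApp (LApp LC2 z) x) y) x"
| r4: "s_root (LApp (LApp (LApp LC2 LT) x) y) x"
| r5: "s_root (LApp (LApp (LApp LC2 LF) x) y) y"
| r6: "s_root (LApp (LApp (LApp LC2 LT1) x) y) x"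
| r7: "s_root (LApp (LApp (LApp LC2 LF1) x) y) y"
| r8: "s_root (LApp (LApp LK1 x) y) x"
| rS: "\<lbrakk> length ys \<ge> 1; length ns = Suc (length ys); length zss = length ns;
         \<forall>i<length ns. ns ! i \<ge> 1 \<and> length (zss ! i) = ns ! i;
         \<forall>a\<in>set (concat zss). \<forall>b\<in>set (concat zss). clc_conv (lerase a) (lerase b);
         \<forall>a\<in>set ys. \<forall>b\<in>set ys. clc_conv (lerase a) (lerase b) \<rbrakk> \<Longrightarrow>
       s_root (LApp (LApp (LApp (LSl ns) x) (mktup ys)) (Tup (concat zss)))
              (LApp (LApp x (mktup (hd zss)))
                    (mktup (map (\<lambda>(y, zs). LApp y (mktup zs)) (zip ys (tl zss)))))"

inductive s_ctx :: "bool \<Rightarrow> lterm \<Rightarrow> lterm \<Rightarrow> bool" for intup :: bool where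
  root: "s_root s t \<Longrightarrow> s_ctx intup s t"
| appL: "s_ctx intup s s' \<Longrightarrow> s_ctx intup (LApp s t) (LApp s' t)"
| appR: "s_ctx intup t t' \<Longrightarrow> s_ctx intup (LApp s t) (LApp s t')"
| tup: "\<lbrakk> intup; i < length ts; s_ctx intup (ts ! i) u \<rbrakk> \<Longrightarrow>
          s_ctx intup (Tup ts) (Tup (ts[i := u]))"

abbreviation s_step :: "lterm \<Rightarrow> lterm \<Rightarrow> bool" where
  "s_step \<equiv> s_ctx True"

abbreviation s_step_notup :: "lterm \<Rightarrow> lterm \<Rightarrow> bool" where
  "s_step_notup \<equiv> s_ctx False"

end

theory Submission
  imports Defs
begin



lemma clc_ctx_mono: "clc_ctx c1 a b \<Longrightarrow> (\<And>x y. c1 x y \<Longrightarrow> c2 x y) \<Longrightarrow> clc_ctx c2 a b"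
  by (induction rule: clc_ctx.induct) (auto intro: clc_ctx.intros)

lemma equivclp_mono': "equivclp r a b \<Longrightarrow> (\<And>x y. r x y \<Longrightarrow> s x y) \<Longrightarrow> equivclp s a b"
  by (induction rule: equivclp_induct) (auto intro: equivclp_into_equivclp)

lemma clc_R_Suc: "clc_R n a b \<Longrightarrow> clc_R (Suc n) a b"
proof (induction n arbitrary: a b)
  case 0 then show ?case by (auto elim: clc_ctx_mono)
next
  case (Suc n)
  then show ?case by (auto elim!: clc_ctx_mono intro: equivclp_mono')
qed

lemma clc_R_mono: "n \<le> m \<Longrightarrow> clc_R n a b \<Longrightarrow> clc_R m a b"
proof (induction m rule: dec_induct)
  case base then show ?case .
next
  case (step k) then show ?case using clc_R_Suc[of k a b] by blast
qed

lemma clc_conv_level: "clc_conv a b \<Longrightarrow> \<exists>n. equivclp (clc_R n) a b"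
  unfolding clc_conv_def
proof (induction rule: equivclp_induct)
  case base then show ?case by auto
next
  case (step y z)
  then obtain n where n: "equivclp (clc_R n) a y" by auto
  from step(2) obtain m where m: "clc_R m y z \<or> clc_R m z y" unfolding clc_step_def by auto
  have "equivclp (clc_R (max n m)) a y" using n by (rule equivclp_mono') (rule clc_R_mono[of n], auto)
  moreover have "clc_R (max n m) y z \<or> clc_R (max n m) z y" using m clc_R_mono[of m "max n m"] by auto
  ultimately show ?case by (blast intro: equivclp_into_equivclp)
qed

lemma clc_stepI: "clc_R n a b \<Longrightarrow> clc_conv a b"
  unfolding clc_conv_def clc_step_def by blast

lemma clc_conv_trans [trans]: "clc_conv a b \<Longrightarrow> clc_conv b c \<Longrightarrow> clc_conv a c"
  unfolding clc_conv_def by (rule equivclp_trans)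
lemma clc_conv_sym: "clc_conv a b \<Longrightarrow> clc_conv b a"
  unfolding clc_conv_def by (rule equivclp_sym)
lemma clc_conv_refl[simp]: "clc_conv a a"
  unfolding clc_conv_def by simp

lemma clc_conv_cong: "clc_conv a b \<Longrightarrow> (\<And>x y n. clc_R n x y \<Longrightarrow> clc_R n (f x) (f y)) \<Longrightarrow> clc_conv (f a) (f b)"
  unfolding clc_conv_def
proof (induction rule: equivclp_induct)
  case base then show ?case by simp
next
  case (step y z)
  then show ?case unfolding clc_step_def by (blast intro: equivclp_into_equivclp)
qed

lemma clc_R_appL: "clc_R n x y \<Longrightarrow> clc_R n (IApp x c) (IApp y c)"
  by (cases n) (auto intro: clc_ctx.intros)
lemma clc_R_appR: "clc_R n x y \<Longrightarrow> clc_R n (IApp c x) (IApp c y)"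
  by (cases n) (auto intro: clc_ctx.intros)

lemma clc_conv_app: "clc_conv a b \<Longrightarrow> clc_conv c d \<Longrightarrow> clc_conv (IApp a c) (IApp b d)"
proof -
  assume "clc_conv a b" "clc_conv c d"
  have "clc_conv (IApp a c) (IApp b c)"
    using clc_conv_cong[OF \<open>clc_conv a b\<close>, of "\<lambda>x. IApp x c"] clc_R_appL by blast
  moreover have "clc_conv (IApp b c) (IApp b d)"
    using clc_conv_cong[OF \<open>clc_conv c d\<close>, of "\<lambda>x. IApp b x"] clc_R_appR by blast
  ultimately show ?thesis by (rule clc_conv_trans)
qed

lemma clc_condC: "clc_conv x y \<Longrightarrow> clc_conv (IApp (IApp (IApp IC z) x) y) x"
proof -
  assume "clc_conv x y"
  then obtain n where "equivclp (clc_R n) x y" using clc_conv_level by blast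
  then have "clc_R (Suc n) (IApp (IApp (IApp IC z) x) y) x" by (auto intro: clc_ctx.intros)
  then show ?thesis by (rule clc_stepI)
qed




lemma lerase_mktup: "xs \<noteq> [] \<Longrightarrow> lerase (mktup xs) = lerase (hd xs)"
  by (cases xs rule: mktup.cases) auto

lemma clc0: "clc_ctx (\<lambda>_ _. False) a b \<Longrightarrow> clc_conv a b"
  using clc_stepI[of 0] by simp

lemma root_erase: "s_root s t \<Longrightarrow> clc_conv (lerase s) (lerase t)"
proof (induction rule: s_root.induct)
  case (r3 x y z) then show ?case by (simp add: clc_condC)
next
  case (rS ys ns zss x)
  obtain y1 ys' where ys: "ys = y1 # ys'" using rS(1) by (cases ys) auto
  have l2: "length zss \<ge> 2" using rS by auto
  then obtain z0s z1s rest where zss: "zss = z0s # z1s # rest"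
    by (cases zss; cases "tl zss") auto
  have "length z0s \<ge> 1" using rS(4)[rule_format, of 0] rS(2) zss by auto
  then obtain z0 z0s' where z0s: "z0s = z0 # z0s'" by (cases z0s) auto
  have "length z1s \<ge> 1" using rS(4)[rule_format, of 1] rS(2) zss ys by auto
  then obtain z1 z1s' where z1s: "z1s = z1 # z1s'" by (cases z1s) auto
  have ne: "map (\<lambda>(y, zs). LApp y (mktup zs)) (zip ys (tl zss)) \<noteq> []"
    using ys zss by simp
  have hdm: "hd (map (\<lambda>(y, zs). LApp y (mktup zs)) (zip ys (tl zss))) = LApp y1 (mktup z1s)"
    using ys zss by simp
  have c: "clc_conv (lerase z0) (lerase z1)"
    using rS(5) zss z0s z1s by auto
  have "clc_conv (IApp (IApp (IApp IS (lerase x)) (lerase y1)) (lerase z0))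
     (IApp (IApp (lerase x) (lerase z0)) (IApp (lerase y1) (lerase z0)))"
    by (rule clc0) (rule clc_ctx.cS)
  also have "clc_conv \<dots> (IApp (IApp (lerase x) (lerase z0)) (IApp (lerase y1) (lerase z1)))"
    using c by (intro clc_conv_app clc_conv_refl)
  finally show ?case
    using ne hdm ys zss z0s z1s by (simp add: lerase_mktup)
qed (auto intro!: clc0 intro: clc_ctx.intros)

lemma step_erase: "s_ctx b s t \<Longrightarrow> clc_conv (lerase s) (lerase t)"
proof (induction rule: s_ctx.induct)
  case (root s t) then show ?case by (rule root_erase)
next
  case (appL s s' t) then show ?case by (simp add: clc_conv_app)
next
  case (appR t t' s) then show ?case by (simp add: clc_conv_app)
next
  case (tup i ts u)
  then show ?case by (cases ts; cases i) auto
qed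




inductive instep :: "lterm \<Rightarrow> lterm \<Rightarrow> bool" where
  itup: "i < length ts \<Longrightarrow> s_step (ts ! i) u \<Longrightarrow> instep (Tup ts) (Tup (ts[i := u]))"
| iappL: "instep s s' \<Longrightarrow> instep (LApp s t) (LApp s' t)"
| iappR: "instep t t' \<Longrightarrow> instep (LApp s t) (LApp s t')"

lemma instep_step: "instep s t \<Longrightarrow> s_step s t"
  by (induction rule: instep.induct) (auto intro: s_ctx.intros)

lemma step_split: "s_ctx b s t \<Longrightarrow> b \<Longrightarrow> s_step_notup s t \<or> instep s t"
  by (induction rule: s_ctx.induct) (auto intro: s_ctx.intros instep.intros)

lemma instep_app: "instep t (LApp a b) \<Longrightarrow>
   (\<exists>a0. t = LApp a0 b \<and> instep a0 a) \<or> (\<exists>b0. t = LApp a b0 \<and> instep b0 b)"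
  by (cases rule: instep.cases) auto

lemma instep_tup: "instep t (Tup ys) \<Longrightarrow>
   \<exists>ts i. t = Tup ts \<and> i < length ts \<and> ys = ts[i := ys ! i] \<and> s_step (ts ! i) (ys ! i)"
proof -
  assume "instep t (Tup ys)"
  then obtain ts i u where "t = Tup ts" "i < length ts" "ys = ts[i := u]" "s_step (ts ! i) u"
    by (cases rule: instep.cases) auto
  then show ?thesis by (intro exI[of _ ts] exI[of _ i]) auto
qed

lemma instep_atom: "instep t u \<Longrightarrow> (\<exists>a b. u = LApp a b) \<or> (\<exists>ys. u = Tup ys)"
  by (cases rule: instep.cases) auto

lemma mktup_Tup: "length xs \<ge> 2 \<Longrightarrow> mktup xs = Tup xs"
  by (cases xs rule: mktup.cases) auto

lemma instep_mktup: "instep T (mktup ys) \<Longrightarrow> ys \<noteq> [] \<Longrightarrow>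
  \<exists>ys0 i. T = mktup ys0 \<and> i < length ys \<and> ys0 = ys[i := ys0 ! i] \<and> s_step (ys0 ! i) (ys ! i)"
proof -
  assume a: "instep T (mktup ys)" "ys \<noteq> []"
  show ?thesis
  proof (cases "length ys = 1")
    case True
    then obtain y where ys: "ys = [y]" by (cases ys) auto
    show ?thesis using a ys by (intro exI[of _ "[T]"] exI[of _ 0]) (auto intro: instep_step)
  next
    case False
    then have "length ys \<ge> 2" using a(2) by (cases ys; cases "tl ys") auto
    then have "mktup ys = Tup ys" by (rule mktup_Tup)
    with a(1) have "instep T (Tup ys)" by simp
    then obtain ts i where ts: "T = Tup ts" "i < length ts" "ys = ts[i := ys ! i]"
       "s_step (ts ! i) (ys ! i)" using instep_tup by blast
    have len: "length ts = length ys" using ts(3) by (metis length_list_update)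
    have "ts = ys[i := ts ! i]" using ts(3) by (metis list_update_id list_update_overwrite)
    moreover have "mktup ts = Tup ts" using len \<open>length ys \<ge> 2\<close> by (simp add: mktup_Tup)
    ultimately show ?thesis using ts len by (intro exI[of _ ts] exI[of _ i]) auto
  qed
qed

lemma mktup_step: "i < length xs \<Longrightarrow> s_step a b \<Longrightarrow> s_step (mktup (xs[i := a])) (mktup (xs[i := b]))"
proof (cases "length xs = 1")
  case True
  assume "i < length xs" "s_step a b"
  with True show ?thesis by (cases xs) auto
next
  case False
  assume a: "i < length xs" "s_step a b"
  then have "length xs \<ge> 2" using False by auto
  then have "mktup (xs[i := a]) = Tup (xs[i := a])" "mktup (xs[i := b]) = Tup (xs[i := b])"
    by (simp_all add: mktup_Tup)
  moreover have "s_step (Tup (xs[i := a])) (Tup ((xs[i := a])[i := b]))"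
    by (rule s_ctx.tup) (use a in auto)
  ultimately show ?thesis by simp
qed

lemma map_zip_updR: "k < length ys \<Longrightarrow> length L = length ys \<Longrightarrow>
   map f (zip ys (L[k := a])) = (map f (zip ys L))[k := f (ys ! k, a)]"
  by (metis list_update_id map_update zip_update)

lemma map_zip_updL: "k < length ys \<Longrightarrow> length L = length ys \<Longrightarrow>
   map f (zip (ys[k := a]) L) = (map f (zip ys L))[k := f (a, L ! k)]"
  by (metis list_update_id map_update zip_update)

lemma conv_update: "\<forall>a\<in>set xs. \<forall>b\<in>set xs. clc_conv (lerase a) (lerase b) \<Longrightarrow> i < length xs \<Longrightarrow>
   clc_conv (lerase a0) (lerase (xs ! i)) \<Longrightarrow>
   \<forall>a\<in>set (xs[i := a0]). \<forall>b\<in>set (xs[i := a0]). clc_conv (lerase a) (lerase b)"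
proof (intro ballI)
  fix a b assume h: "\<forall>a\<in>set xs. \<forall>b\<in>set xs. clc_conv (lerase a) (lerase b)" "i < length xs"
    "clc_conv (lerase a0) (lerase (xs ! i))" "a \<in> set (xs[i := a0])" "b \<in> set (xs[i := a0])"
  have xi: "xs ! i \<in> set xs" using h(2) by simp
  have g: "c \<in> set (xs[i := a0]) \<Longrightarrow> clc_conv (lerase c) (lerase (xs ! i))" for c
  proof -
    assume "c \<in> set (xs[i := a0])"
    then have "c = a0 \<or> c \<in> set xs" using set_update_subset_insert by fastforce
    then show ?thesis using h(1,3) xi by auto
  qed
  show "clc_conv (lerase a) (lerase b)"
    using g[OF h(4)] g[OF h(5)] by (blast intro: clc_conv_trans clc_conv_sym)
qed

lemma concat_upd: "j < length (concat zss) \<Longrightarrow>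
  \<exists>i k. i < length zss \<and> k < length (zss ! i) \<and>
     (concat zss)[j := a] = concat (zss[i := (zss ! i)[k := a]]) \<and> concat zss ! j = zss ! i ! k"
proof (induction zss arbitrary: j)
  case Nil then show ?case by simp
next
  case (Cons zs zss)
  show ?case
  proof (cases "j < length zs")
    case True
    then show ?thesis
      by (intro exI[of _ 0] exI[of _ j]) (auto simp: list_update_append nth_append)
  next
    case False
    then have "j - length zs < length (concat zss)" using Cons.prems by auto
    from Cons.IH[OF this] obtain i k where ik: "i < length zss" "k < length (zss ! i)"
      "(concat zss)[j - length zs := a] = concat (zss[i := (zss ! i)[k := a]])"
      "concat zss ! (j - length zs) = zss ! i ! k" by blast
    show ?thesis using False ik
      by (intro exI[of _ "Suc i"] exI[of _ k]) (auto simp: list_update_append nth_append)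
  qed
qed




lemma instep_const[simp]: "\<not> instep t LC1" "\<not> instep t LC2" "\<not> instep t LT1" "\<not> instep t LF1"
  "\<not> instep t LK1" "\<not> instep t LT" "\<not> instep t LF" "\<not> instep t (LSl ns)"
  by (auto dest: instep_atom)

lemma conv_step_l: "clc_conv (lerase x) (lerase y) \<Longrightarrow> s_step x0 x \<Longrightarrow> clc_conv (lerase x0) (lerase y)"
  using step_erase clc_conv_trans by blast
lemma conv_step_r: "clc_conv (lerase x) (lerase y) \<Longrightarrow> s_step y0 y \<Longrightarrow> clc_conv (lerase x) (lerase y0)"
  using step_erase clc_conv_trans clc_conv_sym by blast

lemma root_comm_simple: "s_root u v \<Longrightarrow> instep t u \<Longrightarrow> \<not> (\<exists>ns a b c. u = LApp (LApp (LApp (LSl ns) a) b) c) \<Longrightarrow>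
   \<exists>w. s_root t w \<and> (w = v \<or> s_step w v)"
proof (induction rule: s_root.induct)
  case (r3 x y z)
  from r3(2) consider (z) z0 where "t = LApp (LApp (LApp LC2 z0) x) y"
    | (x) x0 where "t = LApp (LApp (LApp LC2 z) x0) y" "instep x0 x"
    | (y) y0 where "t = LApp (LApp (LApp LC2 z) x) y0" "instep y0 y"
    by (auto dest!: instep_app)
  then show ?case
  proof cases
    case z then show ?thesis using r3(1) by (intro exI[of _ x]) (auto intro: s_root.r3)
  next
    case x then show ?thesis using r3(1) by (intro exI[of _ x0]) (auto intro: s_root.r3 instep_step conv_step_l)
  next
    case y then show ?thesis using r3(1) by (intro exI[of _ x]) (auto intro: s_root.r3 instep_step conv_step_r)
  qed
qed (fastforce dest!: instep_app intro: s_root.intros instep_step)+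




lemma tl_upd: "0 < i \<Longrightarrow> tl (xs[i := a]) = (tl xs)[i - 1 := a]"
  by (cases xs; cases i) auto

lemma hd_upd0: "xs \<noteq> [] \<Longrightarrow> hd (xs[0 := a]) = a"
  by (cases xs) auto

lemma tl_upd0: "tl (xs[0 := a]) = tl xs"
  by (cases xs) auto

lemma hd_updS: "0 < i \<Longrightarrow> hd (xs[i := a]) = hd xs"
  by (cases xs; cases i) auto

lemma root_comm_S:
  fixes f :: "lterm \<times> lterm list \<Rightarrow> lterm"
  defines "f \<equiv> (\<lambda>(y, zs). LApp y (mktup zs))"
  assumes h1: "length ys \<ge> 1" and h2: "length ns = Suc (length ys)" and h3: "length zss = length ns"
    and h4: "\<forall>i<length ns. ns ! i \<ge> 1 \<and> length (zss ! i) = ns ! i"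
    and h5: "\<forall>a\<in>set (concat zss). \<forall>b\<in>set (concat zss). clc_conv (lerase a) (lerase b)"
    and h6: "\<forall>a\<in>set ys. \<forall>b\<in>set ys. clc_conv (lerase a) (lerase b)"
    and ins: "instep t (LApp (LApp (LApp (LSl ns) x) (mktup ys)) (Tup (concat zss)))"
  shows "\<exists>w. s_root t w \<and> (w = LApp (LApp x (mktup (hd zss))) (mktup (map f (zip ys (tl zss))))
           \<or> s_step w (LApp (LApp x (mktup (hd zss))) (mktup (map f (zip ys (tl zss))))))"
proof -
  let ?M = "map f (zip ys (tl zss))"
  have ltl: "length (tl zss) = length ys" using h2 h3 by simp
  have zne: "zss \<noteq> []" using h2 h3 by auto
  have yne: "ys \<noteq> []" using h1 by auto
  from ins consider (x) x0 where "t = LApp (LApp (LApp (LSl ns) x0) (mktup ys)) (Tup (concat zss))" "instep x0 x"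
    | (y) Y0 where "t = LApp (LApp (LApp (LSl ns) x) Y0) (Tup (concat zss))" "instep Y0 (mktup ys)"
    | (z) B where "t = LApp (LApp (LApp (LSl ns) x) (mktup ys)) B" "instep B (Tup (concat zss))"
    by (auto dest!: instep_app)
  then show ?thesis
  proof cases
    case x
    have "s_root t (LApp (LApp x0 (mktup (hd zss))) (mktup ?M))"
      unfolding x(1) f_def by (rule s_root.rS) (use h1 h2 h3 h4 h5 h6 in auto)
    moreover have "s_step (LApp (LApp x0 (mktup (hd zss))) (mktup ?M)) (LApp (LApp x (mktup (hd zss))) (mktup ?M))"
      using x(2) by (intro s_ctx.appL instep_step)
    ultimately show ?thesis by blast
  next
    case y
    from instep_mktup[OF y(2) yne] obtain ys0 i where yi: "Y0 = mktup ys0" "i < length ys"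
      "ys0 = ys[i := ys0 ! i]" "s_step (ys0 ! i) (ys ! i)" by blast
    define a0 where "a0 = ys0 ! i"
    have ys0: "ys0 = ys[i := a0]" using yi(3) a0_def by simp
    have st: "s_step a0 (ys ! i)" using yi(4) a0_def by simp
    have c6: "\<forall>a\<in>set ys0. \<forall>b\<in>set ys0. clc_conv (lerase a) (lerase b)"
      unfolding ys0 by (rule conv_update[OF h6 yi(2)]) (rule step_erase[OF st])
    have "s_root t (LApp (LApp x (mktup (hd zss))) (mktup (map f (zip ys0 (tl zss)))))"
      unfolding y(1) yi(1) f_def by (rule s_root.rS) (use h1 h2 h3 h4 h5 c6 ys0 in auto)
    moreover have "map f (zip ys0 (tl zss)) = ?M[i := f (a0, tl zss ! i)]"
      unfolding ys0 using yi(2) ltl by (rule map_zip_updL)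
    moreover have "?M[i := f (ys ! i, tl zss ! i)] = ?M"
      using yi(2) ltl by (metis list_update_id length_zip min.idem nth_map nth_zip length_map)
    moreover have "s_step (mktup (?M[i := f (a0, tl zss ! i)])) (mktup (?M[i := f (ys ! i, tl zss ! i)]))"
      using yi(2) ltl st unfolding f_def by (intro mktup_step) (auto intro: s_ctx.appL)
    ultimately show ?thesis by (metis s_ctx.appR)
  next
    case z
    from instep_tup[OF z(2)] obtain ts j where tj: "B = Tup ts" "j < length ts"
      "concat zss = ts[j := concat zss ! j]" "s_step (ts ! j) (concat zss ! j)" by blast
    define d where "d = ts ! j"
    have ts: "ts = (concat zss)[j := d]" using tj(3) d_def by (metis list_update_id list_update_overwrite)
    have jl: "j < length (concat zss)" using tj(2) ts by simp
    from concat_upd[OF jl, of d] obtain i k where ik: "i < length zss" "k < length (zss ! i)"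
      "(concat zss)[j := d] = concat (zss[i := (zss ! i)[k := d]])" "concat zss ! j = zss ! i ! k" by blast
    define zss0 where "zss0 = zss[i := (zss ! i)[k := d]]"
    have st: "s_step d (zss ! i ! k)" using tj(4) ik(4) d_def by simp
    have c5: "\<forall>a\<in>set (concat zss0). \<forall>b\<in>set (concat zss0). clc_conv (lerase a) (lerase b)"
      unfolding zss0_def ik(3)[symmetric] by (rule conv_update[OF h5 jl]) (use tj(4) d_def in \<open>auto intro: step_erase\<close>)
    have h4': "\<forall>i'<length ns. ns ! i' \<ge> 1 \<and> length (zss0 ! i') = ns ! i'"
      using h4 ik unfolding zss0_def by (auto simp: nth_list_update)
    have "s_root t (LApp (LApp x (mktup (hd zss0))) (mktup (map f (zip ys (tl zss0)))))"
      unfolding z(1) tj(1) ts ik(3) zss0_def[symmetric] f_def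
      by (rule s_root.rS[OF h1 h2 _ h4' c5 h6]) (simp add: zss0_def h3)
    moreover have "s_step (LApp (LApp x (mktup (hd zss0))) (mktup (map f (zip ys (tl zss0)))))
                           (LApp (LApp x (mktup (hd zss))) (mktup ?M))"
    proof (cases "i = 0")
      case True
      have e1: "hd zss0 = (hd zss)[k := d]" "tl zss0 = tl zss"
        using True zne unfolding zss0_def by (auto simp: hd_upd0 tl_upd0 hd_conv_nth)
      have "s_step (mktup ((hd zss)[k := d])) (mktup ((hd zss)[k := zss ! i ! k]))"
        using ik(2) True zne st by (intro mktup_step) (auto simp: hd_conv_nth)
      moreover have "(hd zss)[k := zss ! i ! k] = hd zss" using True zne by (simp add: hd_conv_nth)
      ultimately have s: "s_step (mktup ((hd zss)[k := d])) (mktup (hd zss))" by simp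
      show ?thesis unfolding e1 by (rule s_ctx.appL[OF s_ctx.appR[OF s]])
    next
      case False
      then have ip: "0 < i" by simp
      have il: "i - 1 < length ys" using ik(1) h2 h3 ip by auto
      have e1: "hd zss0 = hd zss" "tl zss0 = (tl zss)[i - 1 := (zss ! i)[k := d]]"
        using ip unfolding zss0_def by (auto simp: hd_updS tl_upd)
      have e2: "map f (zip ys (tl zss0)) = ?M[i - 1 := f (ys ! (i - 1), (zss ! i)[k := d])]"
        unfolding e1 using il ltl by (rule map_zip_updR)
      have tli: "tl zss ! (i - 1) = zss ! i" using ip zne by (cases zss) auto
      have "?M ! (i - 1) = f (ys ! (i - 1), (zss ! i)[k := zss ! i ! k])"
        using il ltl tli by simp
      then have e3: "?M[i - 1 := f (ys ! (i - 1), (zss ! i)[k := zss ! i ! k])] = ?M"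
        using list_update_id[of ?M "i - 1"] by simp
      have "s_step (LApp (ys ! (i - 1)) (mktup ((zss ! i)[k := d])))
                   (LApp (ys ! (i - 1)) (mktup ((zss ! i)[k := zss ! i ! k])))"
        using ik(2) st by (intro s_ctx.appR mktup_step)
      then have "s_step (mktup (?M[i - 1 := f (ys ! (i - 1), (zss ! i)[k := d])]))
                      (mktup (?M[i - 1 := f (ys ! (i - 1), (zss ! i)[k := zss ! i ! k])]))"
        using il ltl unfolding f_def by (intro mktup_step) auto
      then have s2: "s_step (mktup (?M[i - 1 := f (ys ! (i - 1), (zss ! i)[k := d])])) (mktup ?M)"
        by (simp only: e3)
      show ?thesis unfolding e1(1) e2 by (rule s_ctx.appR[OF s2])
    qed
    ultimately show ?thesis by blast
  qed
qed




lemma root_comm: "s_root u v \<Longrightarrow> instep t u \<Longrightarrow> \<exists>w. s_root t w \<and> (w = v \<or> s_step w v)"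
proof (induction rule: s_root.induct)
  case (rS ys ns zss x)
  show ?case by (rule root_comm_S[OF rS(1-7)])
qed (auto intro: root_comm_simple[OF _ _] s_root.intros)

lemma comm: "s_step_notup u v \<Longrightarrow> instep t u \<Longrightarrow> \<exists>w. s_step_notup t w \<and> (w = v \<or> s_step w v)"
proof (induction arbitrary: t rule: s_ctx.induct)
  case (root s t') then show ?case using root_comm by (blast intro: s_ctx.root)
next
  case (appL s s' r)
  from instep_app[OF appL(3)] show ?case
  proof
    assume "\<exists>a0. t = LApp a0 r \<and> instep a0 s"
    then obtain a0 where a: "t = LApp a0 r" "instep a0 s" by blast
    from appL.IH[OF a(2)] obtain w where "s_step_notup a0 w" "w = s' \<or> s_step w s'" by blast
    then show ?thesis using a by (intro exI[of _ "LApp w r"]) (auto intro: s_ctx.appL)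
  next
    assume "\<exists>b0. t = LApp s b0 \<and> instep b0 r"
    then obtain b0 where b: "t = LApp s b0" "instep b0 r" by blast
    show ?thesis using b appL(1) by (intro exI[of _ "LApp s' b0"]) (auto intro: s_ctx.appL s_ctx.appR instep_step)
  qed
next
  case (appR r r' s)
  from instep_app[OF appR(3)] show ?case
  proof
    assume "\<exists>a0. t = LApp a0 r \<and> instep a0 s"
    then obtain a0 where a: "t = LApp a0 r" "instep a0 s" by blast
    show ?thesis using a appR(1) by (intro exI[of _ "LApp a0 r'"]) (auto intro: s_ctx.appL s_ctx.appR instep_step)
  next
    assume "\<exists>b0. t = LApp s b0 \<and> instep b0 r"
    then obtain b0 where b: "t = LApp s b0" "instep b0 r" by blast
    from appR.IH[OF b(2)] obtain w where "s_step_notup b0 w" "w = r' \<or> s_step w r'" by blast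
    then show ?thesis using b by (intro exI[of _ "LApp s w"]) (auto intro: s_ctx.appR)
  qed
next
  case (tup i ts u) then show ?case by simp
qed

lemma key: "s_step_notup\<^sup>*\<^sup>* u LF1 \<Longrightarrow> instep t u \<Longrightarrow> s_step_notup\<^sup>*\<^sup>* t LF1"
proof (induction arbitrary: t rule: converse_rtranclp_induct)
  case base then show ?case by simp
next
  case (step u u')
  from comm[OF step(1) step(4)] obtain w where w: "s_step_notup t w" "w = u' \<or> s_step w u'" by blast
  from w(2) have "s_step_notup\<^sup>*\<^sup>* w LF1"
  proof
    assume "w = u'" then show ?thesis using step(2) by simp
  next
    assume "s_step w u'"
    from step_split[OF this] show ?thesis
      using step(2) step(3) by (auto intro: converse_rtranclp_into_rtranclp)
  qed
  with w(1) show ?case by (rule converse_rtranclp_into_rtranclp)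
qed

theorem mainTheorem16:
  assumes "wf_lterm t"
    and "s_step\<^sup>*\<^sup>* t LF1"
  shows "s_step_notup\<^sup>*\<^sup>* t LF1"
  using assms(2)
proof (induction rule: converse_rtranclp_induct)
  case base then show ?case by simp
next
  case (step y z)
  from step_split[OF step(1)] show ?case
    using step(3) by (auto intro: converse_rtranclp_into_rtranclp key)
qed


end
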